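(* For all $M,N\in\Lambda$: $\langle[\,],M^\bullet\rangle\to^*\underline{N}$ if and only if ($M\to_\beta^* N$ and $N\in\mathrm{NF}$). Here $[\,]$ is the trivial context consisting only of the hole.
   Context: **$\lambda$-terms and contexts.** $\Lambda$ is the set of untyped $\lambda$-terms (up to $\alpha$-equivalence). $\to_\beta^*$ is multi-step $\beta$-reduction (the reflexive–transitive closure of one-step $\beta$-reduction), and $\mathrm{NF}\subseteq\Lambda$ is the set of $\beta$-normal forms. A context $C[\,]$ is a $\lambda$-term with exactly one hole $[\,]$. $C[M]$ is the result of filling the hole with $M$; binders of $C$ may capture free variables of $M$. We write $M\,\vec N$ for $M\,N_1\cdots N_n$ (left-associated), where $n\ge 0$. **Atoms and $\Lambda^\bullet$.** For each $M\in\Lambda$ there is a new formal symbol $\underline{M}$, called an atom. Atoms are constants: they have no free variables, and substitution leaves them unchanged. For $M\in\Lambda$, $M^\bullet$ replaces each free occurrence of each variable $x$ in $M$ by the atom $\underline{x}$. Set $\Lambda^\bullet=\{M^\bullet: M\in\Lambda\}$, with substitution extended to these terms by treating atoms as constants. **The set $\Lambda^{\mathrm{rb}}$.** It is the least set such that: 1. $\underline{M}\in\Lambda^{\mathrm{rb}}$ for all $M\in\Lambda$; 2. $\langle C[\,],M\rangle\in\Lambda^{\mathrm{rb}}$ for every context $C[\,]$ and every $M\in\Lambda^\bullet$; 3. $\langle C[\,],M\,\vec N\rangle\in\Lambda^{\mathrm{rb}}$ for every context $C[\,]$, every $M\in\Lambda^{\mathrm{rb}}$ and all $N_1,\dots,N_n\in\Lambda^\bullet$.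 **The relation $\to$ on $\Lambda^{\mathrm{rb}}$.** It is the least relation satisfying: - (R1) $\langle C[\,],\underline{M}\rangle\to\underline{C[M]}$ for $M\in\Lambda$; - (R2) $\langle C[\,],\lambda x.M\rangle\to\langle C[\lambda x.[\,]],M[x:=\underline{x}]\rangle$ for $\lambda x.M\in\Lambda^\bullet$; - (R3) $\langle C[\,],\underline{M}\,N_0\,\vec N\rangle\to\langle C[\,],\langle M\,[\,],N_0\rangle\,\vec N\rangle$ for $M\in\Lambda$ and $N_0,\vec N\in\Lambda^\bullet$; - (R4) $\langle C[\,],(\lambda x.M)\,N_0\,\vec N\rangle\to\langle C[\,],M[x:=N_0]\,\vec N\rangle$ for $\lambda x.M,N_0,\vec N\in\Lambda^\bullet$; - (R5) if $M\to M'$ with $M,M'\in\Lambda^{\mathrm{rb}}$, then $\langle C[\,],M\,\vec N\rangle\to\langle C[\,],M'\,\vec N\rangle$ for every context $C[\,]$ and $\vec N\in\Lambda^\bullet$. $\to^*$ denotes the reflexive–transitive closure of $\to$. *)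

theory Defs
  imports Main
begin

datatype dB = Var nat | App dB dB | Lam dB

primrec lift :: "dB \<Rightarrow> nat \<Rightarrow> dB" where
  "lift (Var i) k = (if i < k then Var i else Var (Suc i))"
| "lift (App s t) k = App (lift s k) (lift t k)"
| "lift (Lam s) k = Lam (lift s (Suc k))"

primrec subst :: "dB \<Rightarrow> dB \<Rightarrow> nat \<Rightarrow> dB" where
  "subst (Var i) s k = (if k < i then Var (i - 1) else if i = k then s else Var i)"
| "subst (App t u) s k = App (subst t s k) (subst u s k)"
| "subst (Lam t) s k = Lam (subst t (lift s 0) (Suc k))"

inductive beta :: "dB \<Rightarrow> dB \<Rightarrow> bool" where
  beta_redex: "beta (App (Lam s) t) (subst s t 0)"
| beta_appL: "beta s t \<Longrightarrow> beta (App s u) (App t u)"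
| beta_appR: "beta s t \<Longrightarrow> beta (App u s) (App u t)"
| beta_abs: "beta s t \<Longrightarrow> beta (Lam s) (Lam t)"

definition NF :: "dB set" where
  "NF = {t. \<not> (\<exists>u. beta t u)}"

datatype ctx = Hole | CAppL ctx dB | CAppR dB ctx | CLam ctx

text \<open>Filling the hole; binders of the context capture free variables (indices) of the term.\<close>
primrec fill :: "ctx \<Rightarrow> dB \<Rightarrow> dB" where
  "fill Hole t = t"
| "fill (CAppL C u) t = App (fill C t) u"
| "fill (CAppR u C) t = App u (fill C t)"
| "fill (CLam C) t = Lam (fill C t)"

primrec cfill :: "ctx \<Rightarrow> ctx \<Rightarrow> ctx" where
  "cfill Hole D = D"
| "cfill (CAppL C u) D = CAppL (cfill C D) u"
| "cfill (CAppR u C) D = CAppR u (cfill C D)"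
| "cfill (CLam C) D = CLam (cfill C D)"

text \<open>BVar: bound variables (de Bruijn); BAtom M: the atom underline-M;
  Cfg C M: the pair \<langle>C[], M\<rangle>.  The content of an atom is a lambda-term whose free
  indices refer to the binders enclosing the hole of the nearest enclosing configuration.\<close>
datatype tm = BVar nat | BApp tm tm | BLam tm | BAtom dB | Cfg ctx tm

definition apps :: "tm \<Rightarrow> tm list \<Rightarrow> tm" where
  "apps M Ns = foldl BApp M Ns"

text \<open>M-bullet: free variables become atoms (at depth d, index k \<ge> d is the free variable k - d).\<close>
primrec bul :: "nat \<Rightarrow> dB \<Rightarrow> tm" where
  "bul d (Var k) = (if k < d then BVar k else BAtom (Var (k - d)))"
| "bul d (App s t) = BApp (bul d s) (bul d t)"
| "bul d (Lam s) = BLam (bul (Suc d) s)"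

definition bullet :: "dB \<Rightarrow> tm" where
  "bullet M = bul 0 M"

definition Lbul :: "tm set" where
  "Lbul = range bullet"

text \<open>Substitution of a (closed) term for the bound variable k; atoms are constants.\<close>
primrec tsubst :: "tm \<Rightarrow> tm \<Rightarrow> nat \<Rightarrow> tm" where
  "tsubst (BVar i) N k = (if k < i then BVar (i - 1) else if i = k then N else BVar i)"
| "tsubst (BApp s t) N k = BApp (tsubst s N k) (tsubst t N k)"
| "tsubst (BLam s) N k = BLam (tsubst s N (Suc k))"
| "tsubst (BAtom M) N k = BAtom M"
| "tsubst (Cfg C s) N k = Cfg C s"

text \<open>When passing under a new binder, the contents of the atoms have to be shifted
  (this is the de Bruijn rendering of the freshness of the bound variable x in rule R2).\<close>
primrec shiftA :: "tm \<Rightarrow> tm" where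
  "shiftA (BVar i) = BVar i"
| "shiftA (BApp s t) = BApp (shiftA s) (shiftA t)"
| "shiftA (BLam s) = BLam (shiftA s)"
| "shiftA (BAtom M) = BAtom (lift M 0)"
| "shiftA (Cfg C s) = Cfg C s"

inductive_set Lrb :: "tm set" where
  rb_atom: "BAtom M \<in> Lrb"
| rb_bul: "M \<in> Lbul \<Longrightarrow> Cfg C M \<in> Lrb"
| rb_app: "M \<in> Lrb \<Longrightarrow> set Ns \<subseteq> Lbul \<Longrightarrow> Cfg C (apps M Ns) \<in> Lrb"

inductive step :: "tm \<Rightarrow> tm \<Rightarrow> bool" where
  R1: "step (Cfg C (BAtom M)) (BAtom (fill C M))"
| R2: "BLam M \<in> Lbul \<Longrightarrow>
       step (Cfg C (BLam M)) (Cfg (cfill C (CLam Hole)) (tsubst (shiftA M) (BAtom (Var 0)) 0))"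
| R3: "N0 \<in> Lbul \<Longrightarrow> set Ns \<subseteq> Lbul \<Longrightarrow>
       step (Cfg C (apps (BApp (BAtom M) N0) Ns)) (Cfg C (apps (Cfg (CAppR M Hole) N0) Ns))"
| R4: "BLam M \<in> Lbul \<Longrightarrow> N0 \<in> Lbul \<Longrightarrow> set Ns \<subseteq> Lbul \<Longrightarrow>
       step (Cfg C (apps (BApp (BLam M) N0) Ns)) (Cfg C (apps (tsubst M N0 0) Ns))"
| R5: "step M M' \<Longrightarrow> M \<in> Lrb \<Longrightarrow> M' \<in> Lrb \<Longrightarrow> set Ns \<subseteq> Lbul \<Longrightarrow>
       step (Cfg C (apps M Ns)) (Cfg C (apps M' Ns))"

end

theory Submission
  imports Defs
begin

definition dapps :: "dB \<Rightarrow> dB list \<Rightarrow> dB" (infixl "\<degree>\<degree>" 150) where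
  "t \<degree>\<degree> ts = foldl App t ts"

lemma dapps_Nil[simp]: "t \<degree>\<degree> [] = t" by (simp add: dapps_def)
lemma dapps_Cons[simp]: "t \<degree>\<degree> (x # xs) = App t x \<degree>\<degree> xs" by (simp add: dapps_def)
lemma dapps_append[simp]: "t \<degree>\<degree> (xs @ ys) = (t \<degree>\<degree> xs) \<degree>\<degree> ys" by (simp add: dapps_def)

lemma lift_lift:
    "i < k + 1 \<Longrightarrow> lift (lift t i) (Suc k) = lift (lift t k) i"
  by (induct t arbitrary: i k) auto

lemma lift_subst [simp]:
    "j < i + 1 \<Longrightarrow> lift (subst t s j) i = subst (lift t (i + 1)) (lift s i) j"
  by (induct t arbitrary: i j s)
    (simp_all add: diff_Suc lift_lift split: nat.split)

lemma lift_subst_lt: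
    "i < j + 1 \<Longrightarrow> lift (subst t s j) i = subst (lift t i) (lift s i) (j + 1)"
  by (induct t arbitrary: i j s) (auto simp add: lift_lift)

lemma subst_lift [simp]: "subst (lift t k) s k = t"
  by (induct t arbitrary: k s) simp_all

lemma subst_subst:
    "i < j + 1 \<Longrightarrow> subst (subst t (lift v i) (Suc j)) (subst u v j) i = subst (subst t u i) v j"
  by (induct t arbitrary: i j u v)
    (simp_all add: diff_Suc lift_lift [symmetric] lift_subst_lt
      split: nat.split)

lemma lift_dapps[simp]: "lift (t \<degree>\<degree> ts) i = lift t i \<degree>\<degree> map (\<lambda>t. lift t i) ts"
  by (induct ts arbitrary: t) auto
lemma subst_dapps[simp]: "subst (t \<degree>\<degree> ts) u i = subst t u i \<degree>\<degree> map (\<lambda>t. subst t u i) ts"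
  by (induct ts arbitrary: t) auto

inductive sred :: "dB \<Rightarrow> dB \<Rightarrow> bool" where
  sVar: "list_all2 sred rs rs' \<Longrightarrow> sred (Var x \<degree>\<degree> rs) (Var x \<degree>\<degree> rs')"
| sAbs: "sred r r' \<Longrightarrow> list_all2 sred ss ss' \<Longrightarrow> sred (Lam r \<degree>\<degree> ss) (Lam r' \<degree>\<degree> ss')"
| sBeta: "sred (subst r s 0 \<degree>\<degree> ss) t \<Longrightarrow> sred (App (Lam r) s \<degree>\<degree> ss) t"


lemma sred_dapps: "sred r r' \<Longrightarrow> list_all2 sred rs rs' \<Longrightarrow> sred (r \<degree>\<degree> rs) (r' \<degree>\<degree> rs')"
proof (induct arbitrary: rs rs' rule: sred.induct)
  case (sVar rs0 rs0' x)
  have "list_all2 sred (rs0 @ rs) (rs0' @ rs')"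
    using sVar by (auto intro: list_all2_appendI elim: list_all2_mono)
  then show ?case using sred.sVar[of "rs0 @ rs" "rs0' @ rs'" x] by simp
next
  case (sAbs r r' ss ss')
  have "list_all2 sred (ss @ rs) (ss' @ rs')"
    using sAbs by (auto intro: list_all2_appendI elim: list_all2_mono)
  then show ?case using sAbs sred.sAbs[of r r' "ss @ rs" "ss' @ rs'"] by simp
next
  case (sBeta r s ss t)
  then show ?case using sred.sBeta[of r s "ss @ rs" "t \<degree>\<degree> rs'"] by simp
qed

lemma sred_App: "sred r r' \<Longrightarrow> sred s s' \<Longrightarrow> sred (App r s) (App r' s')"
  using sred_dapps[of r r' "[s]" "[s']"] by simp

lemma refl_sred: "sred t t"
proof (induct t)
  case (Var x) then show ?case using sred.sVar[of "[]" "[]" x] by simp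
next
  case (App s t) then show ?case by (rule sred_App)
next
  case (Lam t) then show ?case using sred.sAbs[of t t "[]" "[]"] by simp
qed

lemma refl_sreds: "list_all2 sred ts ts"
  by (simp add: list_all2_refl refl_sred)


lemma beta_dapps_L: "beta a b \<Longrightarrow> beta (a \<degree>\<degree> ts) (b \<degree>\<degree> ts)"
  by (induct ts arbitrary: a b) (auto intro: beta.intros)

lemma betas_dapps_L: "beta\<^sup>*\<^sup>* a b \<Longrightarrow> beta\<^sup>*\<^sup>* (a \<degree>\<degree> ts) (b \<degree>\<degree> ts)"
  by (induct rule: rtranclp_induct) (auto intro: beta_dapps_L rtranclp.rtrancl_into_rtrancl)

lemma betas_AppL: "beta\<^sup>*\<^sup>* a b \<Longrightarrow> beta\<^sup>*\<^sup>* (App a c) (App b c)"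
  by (induct rule: rtranclp_induct) (auto intro: beta.intros rtranclp.rtrancl_into_rtrancl)
lemma betas_AppR: "beta\<^sup>*\<^sup>* a b \<Longrightarrow> beta\<^sup>*\<^sup>* (App c a) (App c b)"
  by (induct rule: rtranclp_induct) (auto intro: beta.intros rtranclp.rtrancl_into_rtrancl)
lemma betas_Lam: "beta\<^sup>*\<^sup>* a b \<Longrightarrow> beta\<^sup>*\<^sup>* (Lam a) (Lam b)"
  by (induct rule: rtranclp_induct) (auto intro: beta.intros rtranclp.rtrancl_into_rtrancl)

lemma betas_dapps: "list_all2 beta\<^sup>*\<^sup>* ts ts' \<Longrightarrow> beta\<^sup>*\<^sup>* a b \<Longrightarrow> beta\<^sup>*\<^sup>* (a \<degree>\<degree> ts) (b \<degree>\<degree> ts')"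
proof (induct arbitrary: a b rule: list_all2_induct)
  case Nil then show ?case by simp
next
  case (Cons x xs y ys)
  have "beta\<^sup>*\<^sup>* (App a x) (App b y)"
    using betas_AppL[OF Cons(4)] betas_AppR[OF Cons(1)] by (meson rtranclp_trans)
  then show ?case using Cons by simp
qed

lemma sred_betas: "sred t u \<Longrightarrow> beta\<^sup>*\<^sup>* t u"
proof (induct rule: sred.induct)
  case (sVar rs rs' x)
  then show ?case by (intro betas_dapps) (auto elim: list_all2_mono)
next
  case (sAbs r r' ss ss')
  then show ?case by (intro betas_dapps betas_Lam) (auto elim: list_all2_mono)
next
  case (sBeta r s ss t)
  have "beta (App (Lam r) s \<degree>\<degree> ss) (subst r s 0 \<degree>\<degree> ss)" by (intro beta_dapps_L beta.intros)
  then show ?case using sBeta by (meson converse_rtranclp_into_rtranclp)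
qed

lemma sred_lift: "sred s t \<Longrightarrow> sred (lift s i) (lift t i)"
proof (induct arbitrary: i rule: sred.induct)
  case (sVar rs rs' x)
  hence "list_all2 sred (map (\<lambda>t. lift t i) rs) (map (\<lambda>t. lift t i) rs')"
    by (simp add: list_all2_map1 list_all2_map2 list_all2_mono)
  thus ?case by (cases "x < i") (auto intro: sred.sVar)
next
  case (sAbs r r' ss ss')
  hence "list_all2 sred (map (\<lambda>t. lift t i) ss) (map (\<lambda>t. lift t i) ss')"
    by (simp add: list_all2_map1 list_all2_map2 list_all2_mono)
  with sAbs show ?case by (auto intro: sred.sAbs)
next
  case (sBeta r s ss t)
  thus ?case by (auto intro: sred.sBeta)
qed

lemma sred_subst: "sred r r' \<Longrightarrow> sred s s' \<Longrightarrow> sred (subst r s x) (subst r' s' x)"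
proof (induct arbitrary: s s' x rule: sred.induct)
  case (sVar rs rs' y)
  hence ls: "list_all2 sred (map (\<lambda>t. subst t s x) rs) (map (\<lambda>t. subst t s' x) rs')"
    by (simp add: list_all2_map1 list_all2_map2 list_all2_mono)
  have "sred (subst (Var y) s x) (subst (Var y) s' x)"
    using sVar(2) by (auto intro: refl_sred)
  then show ?case using sred_dapps[OF _ ls] by simp
next
  case (sAbs r r' ss ss')
  from sAbs(4) have "sred (lift s 0) (lift s' 0)" by (rule sred_lift)
  hence "sred (subst r (lift s 0) (Suc x)) (subst r' (lift s' 0) (Suc x))" using sAbs(2) by blast
  moreover from sAbs have "list_all2 sred (map (\<lambda>t. subst t s x) ss) (map (\<lambda>t. subst t s' x) ss')"
    by (simp add: list_all2_map1 list_all2_map2 list_all2_mono)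
  ultimately show ?case by (simp add: sred.sAbs)
next
  case (sBeta r u ss t)
  have e: "subst (subst r u 0) s x = subst (subst r (lift s 0) (Suc x)) (subst u s x) 0"
    using subst_subst[of 0 x r s u] by simp
  from sBeta have "sred (subst (subst r u 0) s x \<degree>\<degree> map (\<lambda>t. subst t s x) ss) (subst t s' x)"
    by simp
  thus ?case unfolding e by (auto intro: sred.sBeta)
qed


inductive lstep :: "dB list \<Rightarrow> dB list \<Rightarrow> bool" where
  lhd: "beta x y \<Longrightarrow> lstep (x # xs) (y # xs)"
| ltl: "lstep xs ys \<Longrightarrow> lstep (x # xs) (x # ys)"

lemma lstep_snoc: "lstep xs ys \<Longrightarrow> lstep (xs @ [z]) (ys @ [z])"
  by (induct rule: lstep.induct) (auto intro: lstep.intros)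

lemma lstep_last: "beta x y \<Longrightarrow> lstep (xs @ [x]) (xs @ [y])"
  by (induct xs) (auto intro: lstep.intros)

lemma dapps_eq_Lam: "r \<degree>\<degree> xs = Lam t \<Longrightarrow> xs = [] \<and> r = Lam t"
  by (cases xs rule: rev_exhaust) auto

lemma dapps_beta_cases:
  "beta (r \<degree>\<degree> rs) s \<Longrightarrow>
   (\<exists>r'. beta r r' \<and> s = r' \<degree>\<degree> rs) \<or> (\<exists>rs'. lstep rs rs' \<and> s = r \<degree>\<degree> rs') \<or>
   (\<exists>t u us. r = Lam t \<and> rs = u # us \<and> s = subst t u 0 \<degree>\<degree> us)"
proof (induct rs arbitrary: s rule: rev_induct)
  case Nil then show ?case by simp
next
  case (snoc x xs)
  from snoc(2) have "beta (App (r \<degree>\<degree> xs) x) s" by simp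
  then show ?case
  proof (cases rule: beta.cases)
    case (beta_redex t)
    then show ?thesis using dapps_eq_Lam[of r xs t] by auto
  next
    case (beta_appL A')
    from snoc(1)[OF this(2)] show ?thesis
    proof (elim disjE exE conjE)
      fix r' assume "beta r r'" "A' = r' \<degree>\<degree> xs" then show ?thesis using beta_appL by auto
    next
      fix rs' assume "lstep xs rs'" "A' = r \<degree>\<degree> rs'"
      then show ?thesis using beta_appL lstep_snoc[of xs rs' x] by auto
    next
      fix t u us assume "r = Lam t" "xs = u # us" "A' = subst t u 0 \<degree>\<degree> us"
      then show ?thesis using beta_appL by auto
    qed
  next
    case (beta_appR x')
    then show ?thesis using lstep_last[of x x' xs] by auto
  qed
qed

lemma lstep_all2: "lstep xs ys \<Longrightarrow> list_all2 (\<lambda>t u. sred t u \<and> (\<forall>r. beta u r \<longrightarrow> sred t r)) zs xs \<Longrightarrow> list_all2 sred zs ys"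
proof (induct arbitrary: zs rule: lstep.induct)
  case (lhd x y xs)
  then obtain z zs' where "zs = z # zs'" "sred z y" "list_all2 (\<lambda>t u. sred t u \<and> (\<forall>r. beta u r \<longrightarrow> sred t r)) zs' xs"
    by (cases zs) auto
  then show ?case by (auto elim: list_all2_mono)
next
  case (ltl xs ys x)
  then obtain z zs' where "zs = z # zs'" "sred z x" "list_all2 (\<lambda>t u. sred t u \<and> (\<forall>r. beta u r \<longrightarrow> sred t r)) zs' xs"
    by (cases zs) auto
  then show ?case using ltl by auto
qed

lemma sred_beta: "sred r r' \<Longrightarrow> beta r' r'' \<Longrightarrow> sred r r''"
proof (induct arbitrary: r'' rule: sred.induct)
  case (sVar rs rs' x)
  from dapps_beta_cases[OF sVar(2)] obtain ss where "lstep rs' ss" "r'' = Var x \<degree>\<degree> ss"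
    by (auto elim: beta.cases)
  then show ?case using lstep_all2 sVar(1) by (auto intro: sred.sVar)
next
  case (sAbs r r' ss ss')
  from dapps_beta_cases[OF sAbs(4)] show ?case
  proof (elim disjE exE conjE)
    fix s assume "beta (Lam r') s" "r'' = s \<degree>\<degree> ss'"
    then obtain r3 where "s = Lam r3" "beta r' r3" by (auto elim: beta.cases)
    then show ?thesis using sAbs \<open>r'' = s \<degree>\<degree> ss'\<close>
      by (auto intro!: sred.sAbs elim: list_all2_mono)
  next
    fix rs' assume "lstep ss' rs'" "r'' = Lam r' \<degree>\<degree> rs'"
    then show ?thesis using sAbs lstep_all2 by (auto intro!: sred.sAbs)
  next
    fix t u' us' assume h: "Lam r' = Lam t" "ss' = u' # us'" "r'' = subst t u' 0 \<degree>\<degree> us'"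
    with sAbs(3) obtain u us where ss: "ss = u # us" "sred u u'" "list_all2 sred us us'"
      by (cases ss) (auto dest: list_all2_mono[where Q=sred])
    have "sred (subst r u 0) (subst r' u' 0)" using sAbs(1) ss(2) by (rule sred_subst)
    hence "sred (subst r u 0 \<degree>\<degree> us) (subst r' u' 0 \<degree>\<degree> us')" using ss(3) by (rule sred_dapps)
    hence "sred (App (Lam r) u \<degree>\<degree> us) (subst r' u' 0 \<degree>\<degree> us')" by (rule sred.sBeta)
    then show ?thesis using h ss by simp
  qed
next
  case (sBeta r s ss t)
  then show ?case by (auto intro: sred.sBeta)
qed

lemma betas_sred: "beta\<^sup>*\<^sup>* r r' \<Longrightarrow> sred r r'"
  by (induct rule: rtranclp_induct) (auto intro: refl_sred sred_beta)

inductive lred :: "dB \<Rightarrow> dB \<Rightarrow> bool" where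
  lVar: "list_all2 lred rs rs' \<Longrightarrow> lred (Var x \<degree>\<degree> rs) (Var x \<degree>\<degree> rs')"
| lAbs: "lred r r' \<Longrightarrow> lred (Lam r) (Lam r')"
| lBeta: "lred (subst r s 0 \<degree>\<degree> ss) t \<Longrightarrow> lred (App (Lam r) s \<degree>\<degree> ss) t"

lemma beta_dapps_lstep: "lstep rs rs' \<Longrightarrow> beta (t \<degree>\<degree> rs) (t \<degree>\<degree> rs')"
  by (induct arbitrary: t rule: lstep.induct) (auto intro: beta.intros beta_dapps_L)

lemma NF_dapps_args: "t \<degree>\<degree> rs \<in> NF \<Longrightarrow> \<forall>r\<in>set rs. r \<in> NF"
proof (induct rs arbitrary: t)
  case Nil then show ?case by simp
next
  case (Cons a rs)
  have "a \<in> NF"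
  proof (rule ccontr)
    assume "a \<notin> NF"
    then obtain b where "beta a b" by (auto simp: NF_def)
    hence "beta (t \<degree>\<degree> (a # rs)) (t \<degree>\<degree> (b # rs))" by (intro beta_dapps_lstep lstep.intros)
    with Cons(2) show False by (auto simp: NF_def)
  qed
  with Cons show ?case by auto
qed

lemma NF_Lam_dapps: "Lam r \<degree>\<degree> ss \<in> NF \<Longrightarrow> ss = [] \<and> r \<in> NF"
proof (cases ss)
  case Nil
  assume h: "Lam r \<degree>\<degree> ss \<in> NF"
  show ?thesis
  proof (rule ccontr)
    assume "\<not> (ss = [] \<and> r \<in> NF)"
    then obtain b where "beta r b" using Nil by (auto simp: NF_def)
    hence "beta (Lam r) (Lam b)" by (rule beta.intros)
    with h Nil show False by (auto simp: NF_def)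
  qed
next
  case (Cons a l)
  assume "Lam r \<degree>\<degree> ss \<in> NF"
  moreover have "beta (App (Lam r) a \<degree>\<degree> l) (subst r a 0 \<degree>\<degree> l)" by (intro beta_dapps_L beta.intros)
  ultimately show ?thesis using Cons by (auto simp: NF_def)
qed

lemma sred_lred: "sred r r' \<Longrightarrow> r' \<in> NF \<Longrightarrow> lred r r'"
proof (induct rule: sred.induct)
  case (sVar rs rs' x)
  from sVar(1) NF_dapps_args[OF sVar(2)] have "list_all2 lred rs rs'"
    by (induct rule: list_all2_induct) auto
  then show ?case by (rule lred.lVar)
next
  case (sAbs r r' ss ss')
  from NF_Lam_dapps[OF sAbs(4)] have "ss' = []" "r' \<in> NF" by auto
  with sAbs(3) have "ss = []" by simp
  with sAbs \<open>ss' = []\<close> \<open>r' \<in> NF\<close> show ?case by (auto intro: lred.lAbs)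
next
  case (sBeta r s ss t)
  then show ?case by (auto intro: lred.lBeta)
qed


primrec liftn :: "nat \<Rightarrow> dB \<Rightarrow> nat \<Rightarrow> dB" where
  "liftn n (Var i) k = (if i < k then Var i else Var (i + n))"
| "liftn n (App s t) k = App (liftn n s k) (liftn n t k)"
| "liftn n (Lam s) k = Lam (liftn n s (Suc k))"

lemma liftn_0[simp]: "liftn 0 s k = s" by (induct s arbitrary: k) auto
lemma lift_liftn: "lift (liftn n s k) k = liftn (Suc n) s k" by (induct s arbitrary: k) auto
lemma bul_liftn: "bul (e + d) (liftn d s e) = bul e s"
proof (induct s arbitrary: e)
  case (Lam s) then show ?case using Lam[of "Suc e"] by simp
qed auto

lemma tsubst_bul: "tsubst (bul (Suc d) r) (bul 0 s) d = bul d (subst r (liftn d s 0) d)"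
proof (induct r arbitrary: d)
  case (Var i) then show ?case using bul_liftn[of 0 d s] by auto
next
  case (Lam r) then show ?case by (simp add: lift_liftn)
qed auto

lemma tsubst_shiftA_bul: "tsubst (shiftA (bul (Suc d) r)) (BAtom (Var 0)) d = bul d r"
  by (induct r arbitrary: d) (auto simp: Suc_diff_Suc)

lemma apps_Nil[simp]: "apps M [] = M" by (simp add: apps_def)
lemma apps_Cons[simp]: "apps M (x # xs) = apps (BApp M x) xs" by (simp add: apps_def)

lemma bullet_dapps: "bullet (t \<degree>\<degree> ts) = apps (bullet t) (map bullet ts)"
  by (induct ts arbitrary: t) (auto simp: bullet_def)

lemma bul0_dapps[simp]: "bul 0 (t \<degree>\<degree> ts) = apps (bul 0 t) (map (bul 0) ts)"
  using bullet_dapps[of t ts] by (simp add: bullet_def[abs_def])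

lemma fill_cfill[simp]: "fill (cfill C D) t = fill C (fill D t)"
  by (induct C) auto

lemma Lbul_BLam: "BLam M \<in> Lbul \<Longrightarrow> \<exists>X. M = bul 1 X"
  unfolding Lbul_def bullet_def
proof (elim rangeE)
  fix Z assume "BLam M = bul 0 Z"
  then show "\<exists>X. M = bul 1 X" by (cases Z) (auto split: if_splits)
qed

lemma Lbul_ex: "N \<in> Lbul \<Longrightarrow> \<exists>Y. N = bul 0 Y"
  unfolding Lbul_def bullet_def by auto

lemma Lbul_list: "set Ns \<subseteq> Lbul \<Longrightarrow> \<exists>Ys. Ns = map bullet Ys"
proof (induct Ns)
  case (Cons a Ns)
  then obtain Ys y where "Ns = map bullet Ys" "a = bullet y" by (auto simp: Lbul_def)
  then show ?case by (intro exI[of _ "y # Ys"]) simp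
qed simp

lemma bul_in_Lbul[simp]: "bul 0 X \<in> Lbul" by (simp add: Lbul_def bullet_def)
lemma bullet_in_Lbul[simp]: "bullet X \<in> Lbul" by (simp add: Lbul_def)
lemma BLam_in_Lbul[simp]: "BLam (bul (Suc 0) X) \<in> Lbul"
  using bul_in_Lbul[of "Lam X"] by simp

lemma step_Lrb: "step M M' \<Longrightarrow> M' \<in> Lrb"
proof (induct rule: step.induct)
  case (R1 C M) then show ?case by (rule rb_atom)
next
  case (R2 M C)
  then obtain X where "M = bul 1 X" using Lbul_BLam by blast
  then show ?case using tsubst_shiftA_bul[of 0 X] by (auto intro: rb_bul)
next
  case (R3 N0 Ns C M)
  have "Cfg (CAppR M Hole) N0 \<in> Lrb" using R3(1) by (rule rb_bul)
  then show ?case using R3(2) by (rule rb_app)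
next
  case (R4 M N0 Ns C)
  obtain X where X: "M = bul 1 X" using Lbul_BLam R4 by blast
  obtain Y where Y: "N0 = bul 0 Y" using Lbul_ex R4 by blast
  obtain Ys where Ys: "Ns = map bullet Ys" using Lbul_list R4 by blast
  have "apps (tsubst M N0 0) Ns = bullet (subst X Y 0 \<degree>\<degree> Ys)"
    using tsubst_bul[of 0 X Y] by (simp add: X Y Ys bullet_dapps bullet_def[abs_def])
  then show ?case by (auto intro: rb_bul)
next
  case (R5 M M' Ns C)
  then show ?case by (auto intro: rb_app)
qed

lemma steps_lift: "step\<^sup>*\<^sup>* A B \<Longrightarrow> A \<in> Lrb \<Longrightarrow> set Ns \<subseteq> Lbul \<Longrightarrow>
   step\<^sup>*\<^sup>* (Cfg C (apps A Ns)) (Cfg C (apps B Ns))"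
proof (induct rule: rtranclp_induct)
  case base then show ?case by simp
next
  case (step y z)
  have "y \<in> Lrb" using step(1,4) by (cases rule: rtranclp.cases) (auto dest: step_Lrb)
  then have "step (Cfg C (apps y Ns)) (Cfg C (apps z Ns))"
    using step by (auto intro: R5 step_Lrb)
  then show ?case using step by (meson rtranclp.rtrancl_into_rtrancl)
qed

lemma complete_args:
  "list_all2 (\<lambda>a b. \<forall>C. step\<^sup>*\<^sup>* (Cfg C (bullet a)) (BAtom (fill C b))) rs rs' \<Longrightarrow>
   step\<^sup>*\<^sup>* (Cfg C (apps (BAtom H) (map bullet rs))) (BAtom (fill C (H \<degree>\<degree> rs')))"
proof (induct arbitrary: H C rule: list_all2_induct)
  case Nil then show ?case by (auto intro: R1)
next
  case (Cons r rs r' rs')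
  have s1: "step (Cfg C (apps (BAtom H) (map bullet (r # rs))))
      (Cfg C (apps (Cfg (CAppR H Hole) (bullet r)) (map bullet rs)))"
    by (simp, rule R3) auto
  have s2: "step\<^sup>*\<^sup>* (Cfg C (apps (Cfg (CAppR H Hole) (bullet r)) (map bullet rs)))
      (Cfg C (apps (BAtom (App H r')) (map bullet rs)))"
  proof -
    have a: "Cfg (CAppR H Hole) (bullet r) \<in> Lrb" by (simp add: rb_bul)
    have b: "set (map bullet rs) \<subseteq> Lbul" by auto
    show ?thesis using steps_lift[OF Cons(1)[rule_format, of "CAppR H Hole"] a b] by simp
  qed
  have s3: "step\<^sup>*\<^sup>* (Cfg C (apps (BAtom (App H r')) (map bullet rs))) (BAtom (fill C (App H r' \<degree>\<degree> rs')))"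
    by (rule Cons(3))
  show ?case using s1 s2 s3 by simp
qed

lemma lred_complete: "lred X Y \<Longrightarrow> step\<^sup>*\<^sup>* (Cfg C (bullet X)) (BAtom (fill C Y))"
proof (induct arbitrary: C rule: lred.induct)
  case (lVar rs rs' x)
  have "list_all2 (\<lambda>a b. \<forall>C. step\<^sup>*\<^sup>* (Cfg C (bullet a)) (BAtom (fill C b))) rs rs'"
    using lVar by (auto elim: list_all2_mono)
  from complete_args[OF this, of C "Var x"] show ?case
    by (simp add: bullet_dapps) (simp add: bullet_def)
next
  case (lAbs r r')
  have "step (Cfg C (bullet (Lam r))) (Cfg (cfill C (CLam Hole)) (bullet r))"
  proof -
    have e: "bullet (Lam r) = BLam (bul 1 r)" by (simp add: bullet_def)
    have "BLam (bul 1 r) \<in> Lbul" using bullet_in_Lbul[of "Lam r"] unfolding e .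
    then show ?thesis using R2[of "bul 1 r" C] tsubst_shiftA_bul[of 0 r] by (simp add: bullet_def)
  qed
  moreover have "step\<^sup>*\<^sup>* (Cfg (cfill C (CLam Hole)) (bullet r)) (BAtom (fill C (Lam r')))"
    using lAbs(2)[of "cfill C (CLam Hole)"] by simp
  ultimately show ?case by (meson converse_rtranclp_into_rtranclp)
next
  case (lBeta r s ss t)
  have "step (Cfg C (apps (BApp (BLam (bul 1 r)) (bullet s)) (map bullet ss)))
     (Cfg C (apps (tsubst (bul 1 r) (bullet s) 0) (map bullet ss)))"
    by (rule R4) (auto simp: bullet_def[symmetric])
  moreover have "apps (tsubst (bul 1 r) (bullet s) 0) (map bullet ss) = bullet (subst r s 0 \<degree>\<degree> ss)"
    using tsubst_bul[of 0 r s] bullet_dapps[of "subst r s 0" ss] by (simp add: bullet_def)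
  moreover have "apps (BApp (BLam (bul 1 r)) (bullet s)) (map bullet ss) = bullet (App (Lam r) s \<degree>\<degree> ss)"
    by (simp add: bullet_dapps bullet_def[abs_def])
  ultimately show ?case using lBeta(2)[of C] by (metis converse_rtranclp_into_rtranclp)
qed


primrec rd :: "nat \<Rightarrow> tm \<Rightarrow> dB" where
  "rd d (BVar i) = Var i"
| "rd d (BApp s t) = App (rd d s) (rd d t)"
| "rd d (BLam s) = Lam (rd (Suc d) s)"
| "rd d (BAtom M) = liftn d M 0"
| "rd d (Cfg C s) = fill C (rd 0 s)"

lemma rd_bul[simp]: "rd d (bul d X) = X"
  by (induct X arbitrary: d) auto

lemma rd_apps[simp]: "rd d (apps T Ns) = rd d T \<degree>\<degree> map (rd d) Ns"
  by (induct Ns arbitrary: T) auto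

lemma beta_fill: "beta a b \<Longrightarrow> beta (fill C a) (fill C b)"
  by (induct C) (auto intro: beta.intros)

lemma betas_fill: "beta\<^sup>*\<^sup>* a b \<Longrightarrow> beta\<^sup>*\<^sup>* (fill C a) (fill C b)"
  by (induct rule: rtranclp_induct) (auto intro: beta_fill rtranclp.rtrancl_into_rtrancl)

lemma step_rd: "step S S' \<Longrightarrow> beta\<^sup>*\<^sup>* (rd 0 S) (rd 0 S')"
proof (induct rule: step.induct)
  case (R2 M C)
  then obtain X where "M = bul 1 X" using Lbul_BLam by blast
  then show ?case using tsubst_shiftA_bul[of 0 X] by simp
next
  case (R4 M N0 Ns C)
  obtain X where X: "M = bul 1 X" using Lbul_BLam R4 by blast
  obtain Y where Y: "N0 = bul 0 Y" using Lbul_ex R4 by blast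
  have "beta (App (Lam X) Y \<degree>\<degree> map (rd 0) Ns) (subst X Y 0 \<degree>\<degree> map (rd 0) Ns)"
    by (intro beta_dapps_L beta.intros)
  then show ?case using tsubst_bul[of 0 X Y] by (simp add: X Y beta_fill r_into_rtranclp)
next
  case (R5 M M' Ns C)
  then show ?case by (simp add: betas_fill betas_dapps_L)
qed simp_all

lemma steps_rd: "step\<^sup>*\<^sup>* S S' \<Longrightarrow> beta\<^sup>*\<^sup>* (rd 0 S) (rd 0 S')"
  by (induct rule: rtranclp_induct) (auto dest: step_rd)

inductive ne and nf where
  ne_Var: "ne (Var x)"
| ne_App: "ne a \<Longrightarrow> nf b \<Longrightarrow> ne (App a b)"
| nf_ne: "ne a \<Longrightarrow> nf a"
| nf_Lam: "nf a \<Longrightarrow> nf (Lam a)"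

lemma ne_nf_NF: "(ne a \<longrightarrow> a \<in> NF \<and> (\<forall>t. a \<noteq> Lam t)) \<and> (nf b \<longrightarrow> b \<in> NF)"
proof (induct rule: ne_nf.induct)
  case (ne_App a b) then show ?case
    by (auto simp: NF_def elim: beta.cases)
next
  case (nf_Lam a) then show ?case
    by (auto simp: NF_def elim: beta.cases)
qed (auto simp: NF_def elim: beta.cases)

primrec lamchain :: "ctx \<Rightarrow> bool" where
  "lamchain Hole = True"
| "lamchain (CAppL C u) = False"
| "lamchain (CAppR u C) = False"
| "lamchain (CLam C) = lamchain C"

definition nctx :: "ctx \<Rightarrow> bool" where
  "nctx D = (\<exists>M L. D = CAppR M L \<and> ne M \<and> lamchain L)"

primrec gT :: "tm \<Rightarrow> bool" where
  "gT (BVar i) = True"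
| "gT (BApp s t) = (gT s \<and> gT t)"
| "gT (BLam s) = gT s"
| "gT (BAtom N) = ne N"
| "gT (Cfg D T) = (nctx D \<and> gT T)"

lemma gT_bul[simp]: "gT (bul d X)"
  by (induct X arbitrary: d) (auto intro: ne_Var)

lemma gT_apps[simp]: "gT (apps T Ns) = (gT T \<and> (\<forall>N\<in>set Ns. gT N))"
  by (induct Ns arbitrary: T) auto

lemma lamchain_fill: "lamchain L \<Longrightarrow> nf t \<Longrightarrow> nf (fill L t)"
  by (induct L) (auto intro: nf_Lam)

lemma lamchain_cfill: "lamchain L \<Longrightarrow> lamchain (cfill L (CLam Hole))"
  by (induct L) auto

lemma gT_Lbul: "N \<in> Lbul \<Longrightarrow> gT N"
  using Lbul_ex by fastforce

lemma step_gT: "step S S' \<Longrightarrow> gT S \<Longrightarrow> gT S'"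
proof (induct rule: step.induct)
  case (R1 C M)
  then obtain M0 L where "C = CAppR M0 L" "ne M0" "lamchain L" "ne M" by (auto simp: nctx_def)
  then show ?case by (auto intro: ne_App lamchain_fill nf_ne)
next
  case (R2 M C)
  then obtain X where "M = bul 1 X" using Lbul_BLam by blast
  moreover from R2 obtain M0 L where "C = CAppR M0 L" "ne M0" "lamchain L" by (auto simp: nctx_def)
  ultimately show ?case using tsubst_shiftA_bul[of 0 X] by (auto simp: nctx_def lamchain_cfill)
next
  case (R3 N0 Ns C M)
  then show ?case by (auto simp: nctx_def)
next
  case (R4 M N0 Ns C)
  obtain X where X: "M = bul 1 X" using Lbul_BLam R4 by blast
  obtain Y where Y: "N0 = bul 0 Y" using Lbul_ex R4 by blast
  show ?case using R4 tsubst_bul[of 0 X Y] by (simp add: X Y)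
qed auto

fun topg :: "tm \<Rightarrow> bool" where
  "topg (BAtom N) = nf N"
| "topg (Cfg C T) = (lamchain C \<and> gT T)"
| "topg _ = False"

lemma step_topg: "step S S' \<Longrightarrow> topg S \<Longrightarrow> topg S'"
proof (induct rule: step.induct)
  case (R1 C M)
  then show ?case by (auto intro: lamchain_fill nf_ne)
next
  case (R2 M C)
  then obtain X where "M = bul 1 X" using Lbul_BLam by blast
  then show ?case using R2 tsubst_shiftA_bul[of 0 X] by (auto simp: lamchain_cfill)
next
  case (R3 N0 Ns C M)
  then show ?case by (auto simp: nctx_def intro: lamchain.simps(1))
next
  case (R4 M N0 Ns C)
  obtain X where X: "M = bul 1 X" using Lbul_BLam R4 by blast
  obtain Y where Y: "N0 = bul 0 Y" using Lbul_ex R4 by blast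
  show ?case using R4 tsubst_bul[of 0 X Y] by (simp add: X Y)
next
  case (R5 M M' Ns C)
  then show ?case using step_gT by auto
qed

lemma steps_topg: "step\<^sup>*\<^sup>* S S' \<Longrightarrow> topg S \<Longrightarrow> topg S'"
  by (induct rule: rtranclp_induct) (auto dest: step_topg)

theorem proposition7:
  fixes M N :: dB
  shows "step\<^sup>*\<^sup>* (Cfg Hole (bullet M)) (BAtom N) \<longleftrightarrow> (beta\<^sup>*\<^sup>* M N \<and> N \<in> NF)"
proof
  assume h: "step\<^sup>*\<^sup>* (Cfg Hole (bullet M)) (BAtom N)"
  from steps_rd[OF h] have "beta\<^sup>*\<^sup>* M N" by (simp add: bullet_def)
  moreover from steps_topg[OF h] have "nf N" by (simp add: bullet_def)
  hence "N \<in> NF" using ne_nf_NF by blast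
  ultimately show "beta\<^sup>*\<^sup>* M N \<and> N \<in> NF" by simp
next
  assume "beta\<^sup>*\<^sup>* M N \<and> N \<in> NF"
  then have "lred M N" using betas_sred sred_lred by blast
  from lred_complete[OF this, of Hole] show "step\<^sup>*\<^sup>* (Cfg Hole (bullet M)) (BAtom N)" by simp
qed

end
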